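(* Let $a_0=0$ and let $a_1<a_2<\cdots$ be the increasing enumeration of $\{m\ge1:\ c_m=1\}$. Then for every $n\ge0$, $$t_{a_n}=\tfrac12(t_n+t_{n+1})+\tfrac12(-1)^n(t_n-t_{n+1}).$$ In particular $t_{a_{2n}}=t_n$ and $t_{a_{2n+1}}=t_{n+1}$ for all $n\ge0$.
   Context: For $n\in\mathbb{N}$ let $s_2(n)$ be the sum of the binary digits of $n$ and $t_n=s_2(n)\bmod 2\in\{0,1\}$ (the Prouhet–Thue–Morse sequence). Let $F(X)=\sum_{n\ge1}t_nX^n\in\mathbb{F}_2[[X]]$ and let $G(X)=\sum_{n\ge1}c_nX^n\in\mathbb{F}_2[[X]]$ be its compositional inverse, i.e. $F(G(X))=G(F(X))=X$. The $c_n$ are identified with integers in $\{0,1\}$. *)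

theory Defs
  imports Complex_Main "HOL-Library.Z2" "HOL-Computational_Algebra.Formal_Power_Series"
    "HOL-Library.Infinite_Set"
begin

fun s2 :: "nat \<Rightarrow> nat" where
  "s2 n = (if n = 0 then 0 else n mod 2 + s2 (n div 2))"
declare s2.simps[simp del]

definition tm :: "nat \<Rightarrow> nat" where
  "tm n = s2 n mod 2"

definition tmF :: "bit fps" where
  "tmF = Abs_fps (\<lambda>n. if n = 0 then 0 else of_nat (tm n))"

text \<open>a_0 = 0, and a_1 < a_2 < ... enumerate {m >= 1. c_m = 1}, where c_m = fps_nth G m.\<close>
definition aseq :: "bit fps \<Rightarrow> nat \<Rightarrow> nat" where
  "aseq G n = (if n = 0 then 0 else enumerate {m. m \<ge> 1 \<and> fps_nth G m = 1} (n - 1))"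

end

theory Submission imports Defs begin
notation fps_nth (infixl "$$" 75)

definition sq :: "bit fps \<Rightarrow> bit fps" where
  "sq f = Abs_fps (\<lambda>n. if even n then f $$ (n div 2) else 0)"

lemma bit_self_add: "(x::bit) + x = 0"
  by (cases x) simp_all

lemma bit_self_mult: "(x::bit) * x = x"
  by (cases x) simp_all

lemma sum_sym_bit:
  fixes g :: "nat \<Rightarrow> bit"
  assumes sym: "\<And>i. i \<le> n \<Longrightarrow> g (n - i) = g i"
  shows "sum g {0..n} = (if even n then g (n div 2) else 0)"
proof -
  define L where "L = {i. i \<le> n \<and> 2*i < n}"
  define M where "M = {i. i \<le> n \<and> 2*i = n}"
  define R where "R = {i. i \<le> n \<and> 2*i > n}"
  have split: "{0..n} = L \<union> M \<union> R" unfolding L_def M_def R_def by auto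
  have fin: "finite L" "finite M" "finite R" unfolding L_def M_def R_def by auto
  have d: "L \<inter> M = {}" "(L \<union> M) \<inter> R = {}" unfolding L_def M_def R_def by auto
  have "sum g R = sum g L"
    apply (rule sum.reindex_bij_witness[of _ "\<lambda>i. n - i" "\<lambda>i. n - i"])
    using sym by (auto simp: L_def R_def)
  hence LR: "sum g L + sum g R = 0" by (simp add: bit_self_add)
  have "sum g {0..n} = sum g L + sum g M + sum g R"
    unfolding split using fin d by (simp add: sum.union_disjoint)
  also have "\<dots> = (sum g L + sum g R) + sum g M" by (simp only: ac_simps)
  also have "\<dots> = sum g M" by (simp only: LR add_0)
  also have "\<dots> = (if even n then g (n div 2) else 0)"
  proof (cases "even n")
    case True
    then have "M = {n div 2}" unfolding M_def by auto
    then show ?thesis using True by (simp add: field_simps)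
  next
    case False
    then have "M = {}" unfolding M_def by auto
    then show ?thesis using False by (simp add: field_simps)
  qed
  finally show ?thesis .
qed

lemma sq_eq: "f * f = sq f"
proof (rule fps_ext)
  fix n
  have "(f * f) $$ n = (\<Sum>i=0..n. f $$ i * f $$ (n - i))" by (simp add: fps_mult_nth)
  also have "\<dots> = (if even n then f $$ (n div 2) * f $$ (n - n div 2) else 0)"
    by (rule sum_sym_bit) (simp add: mult.commute)
  also have "\<dots> = sq f $$ n" unfolding sq_def by (auto simp: bit_self_mult elim!: evenE)
  finally show "(f * f) $$ n = sq f $$ n" .
qed

lemma fps_self_add: "(f::bit fps) + f = 0"
  by (rule fps_ext) (simp only: fps_add_nth bit_self_add fps_zero_nth)

lemma char2: "(1::bit fps) + 1 = 0" by (rule fps_self_add)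

lemma onepX_nth: "((1 + fps_X) * (h::bit fps)) $$ n = h $$ n + (if n = 0 then 0 else h $$ (n - 1))"
  by (simp add: distrib_right)

lemma sq_nth: "sq f $$ n = (if even n then f $$ (n div 2) else 0)"
  by (simp add: sq_def)

lemma s2_0[simp]: "s2 0 = 0" by (subst s2.simps) simp

lemma s2_even: "s2 (2*k) = s2 k"
  by (cases "k = 0") (simp, subst s2.simps, simp)

lemma s2_odd: "s2 (2*k+1) = s2 k + 1"
  by (subst s2.simps) simp

lemma tm_even: "tm (2*k) = tm k" by (simp add: tm_def s2_even)
lemma tm_odd_bit: "(of_nat (tm (2*k+1)) :: bit) = 1 + of_nat (tm k)"
  unfolding tm_def s2_odd by (cases "even (s2 k)") (auto simp: mod2_eq_if)

definition odds :: "bit fps" where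
  "odds = Abs_fps (\<lambda>n. if odd n then 1 else 0)"

lemma tm_rel: "tmF = (1 + fps_X) * sq tmF + odds"
proof (rule fps_ext)
  fix n
  show "tmF $$ n = ((1 + fps_X) * sq tmF + odds) $$ n"
  proof (cases "even n")
    case True
    then obtain k where k: "n = 2*k" by (auto elim: evenE)
    show ?thesis using k
      by (auto simp: onepX_nth sq_nth odds_def tmF_def tm_even)
  next
    case False
    then obtain k where k: "n = 2*k+1" by (auto elim: oddE)
    have "((1 + fps_X) * sq tmF) $$ n = sq tmF $$ n + sq tmF $$ (n-1)"
      by (simp only: onepX_nth k) simp
    also have "\<dots> = tmF $$ k" using k by (simp add: sq_nth)
    finally have "((1 + fps_X) * sq tmF + odds) $$ n = tmF $$ k + 1"
      using k by (simp add: odds_def)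
    also have "\<dots> = tmF $$ n" using k tm_odd_bit[of k]
      by (cases "k = 0") (auto simp: tmF_def tm_def add.commute)
    finally show ?thesis by simp
  qed
qed

lemma odds_rel: "(1 + fps_X * fps_X) * odds = fps_X"
proof (rule fps_ext)
  fix n
  show "((1 + fps_X * fps_X) * odds) $$ n = fps_X $$ n"
    by (cases n; cases "n - 1") (auto simp: distrib_right odds_def mult.assoc)
qed

definition Phi :: "bit fps \<Rightarrow> bit fps" where
  "Phi H = fps_X * ((1 + H*H) + fps_X * ((1+H)*(1+H)*(1+H)))"

lemma G_eq:
  assumes G0: "G $$ 0 = 0" and inv: "tmF oo G = fps_X"
  shows "G = Phi G"
proof -
  have m: "\<And>a b. (a*b) oo G = (a oo G)*(b oo G)" using G0 by (simp add: fps_compose_mult_distrib)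
  have a: "\<And>a b. (a+b) oo G = (a oo G)+(b oo G)" by (simp add: fps_compose_add_distrib)
  have X: "fps_X oo G = G" using G0 by simp
  have "fps_X = ((1 + fps_X) * sq tmF + odds) oo G" using inv tm_rel by simp
  also have "\<dots> = (1 + G) * (fps_X * fps_X) + (odds oo G)"
    by (simp only: a m X fps_compose_1 inv flip: sq_eq)
  finally have h1: "fps_X = (1 + G) * (fps_X * fps_X) + (odds oo G)" .
  have "G = ((1 + fps_X * fps_X) * odds) oo G" by (simp only: odds_rel X)
  also have "\<dots> = (1 + G*G) * (odds oo G)" by (simp only: a m X fps_compose_1)
  finally have h2: "G = (1 + G*G) * (odds oo G)" .
  have o: "odds oo G = fps_X - (1 + G) * (fps_X * fps_X)" using h1 by (simp add: algebra_simps)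
  have "G - Phi G = (1 + 1) * (- fps_X * fps_X * (1 + G) * (1 + G + G*G))"
    unfolding Phi_def by (subst h2, subst o) algebra
  then have "G - Phi G = 0" by (simp only: char2 mult_zero_left)
  then show ?thesis by simp
qed

definition agr :: "nat \<Rightarrow> bit fps \<Rightarrow> bit fps \<Rightarrow> bool" where
  "agr m f g \<longleftrightarrow> (\<forall>i\<le>m. f $$ i = g $$ i)"

lemma agr_refl: "agr m f f" by (simp add: agr_def)

lemma agr_add: "agr m f g \<Longrightarrow> agr m f' g' \<Longrightarrow> agr m (f + f') (g + g')"
  by (simp add: agr_def)

lemma agr_mult: assumes "agr m f g" "agr m f' g'" shows "agr m (f * f') (g * g')"
  unfolding agr_def
proof (intro allI impI)
  fix i assume i: "i \<le> m"
  show "(f * f') $$ i = (g * g') $$ i" unfolding fps_mult_nth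
    by (rule sum.cong) (use assms i in \<open>auto simp: agr_def\<close>)
qed

lemma agr_X: "agr m f g \<Longrightarrow> agr (Suc m) (fps_X * f) (fps_X * g)"
  by (auto simp: agr_def)

lemma Phi_unique: assumes "G = Phi G" "H = Phi H" shows "G = H"
proof -
  have "agr n G H" for n
  proof (induction n)
    case 0
    show ?case using assms by (auto simp: agr_def) (metis Phi_def fps_X_mult_nth)
  next
    case (Suc n)
    have "agr (Suc n) (Phi G) (Phi H)" unfolding Phi_def
      by (intro agr_X agr_add agr_mult agr_refl Suc)
    then show ?case using assms by simp
  qed
  then show ?thesis by (auto simp: agr_def fps_eq_iff)
qed

fun mdb :: "nat \<Rightarrow> bool" where
  "mdb n = (if n = 0 then True else n mod 4 \<le> 1 \<and> mdb (n div 4))"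
declare mdb.simps[simp del]

lemma mdb_0[simp]: "mdb 0" by (subst mdb.simps) simp

lemma mdb_char: "mdb n = (n mod 4 \<le> 1 \<and> mdb (n div 4))"
  by (cases "n = 0") (simp, subst mdb.simps, simp)

definition MM :: "bit fps" where
  "MM = Abs_fps (\<lambda>n. if mdb n then 1 else 0)"

definition G0 :: "bit fps" where
  "G0 = Abs_fps (\<lambda>j. if 1 \<le> j \<and> mdb ((j+1) div 2) then 1 else 0)"

lemma sqsq_nth: "sq (sq f) $$ n = (if 4 dvd n then f $$ (n div 4) else 0)"
  by (auto simp: sq_nth div_mult2_eq elim!: evenE)

lemma two_dvd_cases: "(n::nat) = 4 * (n div 4) + n mod 4 \<and> n mod 4 < 4" by simp

lemma MM_rel: "MM = (1 + fps_X) * sq (sq MM)"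
proof (rule fps_ext)
  fix n
  obtain q r :: nat where n: "n = 4*q + r" and r: "r < 4" using two_dvd_cases by blast
  have md: "n mod 4 = r" "n div 4 = q" using n r by auto
  have m: "mdb n = (r \<le> 1 \<and> mdb q)" using mdb_char[of n] md by simp
  have d1: "4 dvd n \<longleftrightarrow> r = 0" using n r by presburger
  have d2: "n \<noteq> 0 \<Longrightarrow> 4 dvd (n - Suc 0) \<longleftrightarrow> r = 1" using n r by presburger
  have d3: "r = 1 \<Longrightarrow> (n - Suc 0) div 4 = q" using n by simp
  have "((1 + fps_X) * sq (sq MM)) $$ n = sq (sq MM) $$ n + (if n = 0 then 0 else sq (sq MM) $$ (n - 1))"
    by (rule onepX_nth)
  also have "\<dots> = MM $$ n"
  proof (cases "n = 0")
    case True then show ?thesis by (simp add: sqsq_nth MM_def)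
  next
    case False
    then show ?thesis using r
      by (cases "r = 0"; cases "r = 1") (simp_all add: sqsq_nth d1 d2 d3 md m MM_def)
  qed
  finally show "MM $$ n = ((1 + fps_X) * sq (sq MM)) $$ n" by simp
qed

lemma G0_rel: "fps_X * G0 = (1 + fps_X) * (sq MM + 1)"
proof (rule fps_ext)
  fix n
  show "(fps_X * G0) $$ n = ((1 + fps_X) * (sq MM + 1)) $$ n"
  proof (cases n)
    case 0 then show ?thesis by (simp add: onepX_nth sq_nth MM_def bit_self_add)
  next
    case (Suc k)
    show ?thesis
    proof (cases "even k")
      case True
      then obtain d where d: "k = 2*d" by (auto elim: evenE)
      show ?thesis using Suc d
        by (cases "d = 0") (auto simp: onepX_nth sq_nth MM_def G0_def)
    next
      case False
      then obtain d where d: "k = 2*d+1" by (auto elim: oddE)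
      show ?thesis using Suc d
        by (auto simp: onepX_nth sq_nth MM_def G0_def)
    qed
  qed
qed
lemma two_zero: "(2::bit fps) = 0" using char2 by (simp add: one_add_one)

lemma ch2: "(a::bit fps) - b = 2*c + d \<Longrightarrow> d = 0 \<Longrightarrow> a = b"
  by (simp add: two_zero)

lemma G0_fix: "G0 = Phi G0"
proof -
  define x :: "bit fps" where "x = fps_X"
  define M where "M = MM"
  define G where "G = G0"
  have F1: "M = (1+x)*((M*M)*(M*M))" using MM_rel unfolding x_def M_def by (simp add: sq_eq)
  have F2: "x*G = (1+x)*(M*M+1)" using G0_rel unfolding x_def M_def G_def by (simp add: sq_eq)
  define s where "s = x + x*G"
  have S1: "s = x + (1+x)*(M*M+1)" using F2 unfolding s_def by simp
  have S2: "s*s = x + (1+x)*(M+1)"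
  proof (rule ch2)
    show "s*s - (x + (1+x)*(M+1)) = 2*(x*x + x*((1+x)*(M*M+1)) + (1+x)*(1+x)*(M*M))
       + (1+x)*((1+x)*((M*M)*(M*M)) - M)" unfolding S1 by algebra
    show "(1+x)*((1+x)*((M*M)*(M*M)) - M) = 0" using F1 by simp
  qed
  have S3: "(s*s)*(s*s) = (1+x)*s + x"
  proof (rule ch2)
    show "(s*s)*(s*s) - ((1+x)*s + x) = 2*(x*(1+x)*(M+1) + (1+x)*(1+x)*M - x) + 0"
      unfolding S2 by (subst S1) algebra
  qed simp
  define E where "E = s*s*s + s*s + s + x"
  have "(s+1)*E = 0"
  proof (rule ch2)
    show "(s+1)*E - 0 = 2*(s*s*s + s*s + (1+x)*s + x) + ((s*s)*(s*s) - ((1+x)*s + x))"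
      unfolding E_def by algebra
  qed (simp add: S3)
  moreover have "s + 1 \<noteq> 0"
  proof
    assume "s + 1 = 0"
    then have "(s+1) $$ 0 = 0" by simp
    then show False unfolding s_def x_def by simp
  qed
  ultimately have E0: "E = 0" by simp
  have "E = x*(Phi G - G)"
  proof (rule ch2)
    show "E - x*(Phi G - G) = 2*(x*x*G + x + x*G) + 0"
      unfolding E_def s_def Phi_def x_def by algebra
  qed simp
  with E0 have "x * (Phi G - G) = 0" by simp
  moreover have "x \<noteq> 0" unfolding x_def by simp
  ultimately show ?thesis unfolding G_def by simp
qed

lemma G_is_G0:
  assumes "fps_nth G 0 = 0" and "tmF oo G = fps_X"
  shows "G = G0"
  using Phi_unique[OF G_eq[OF assms] G0_fix] .


fun spread :: "nat \<Rightarrow> nat" where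
  "spread k = (if k = 0 then 0 else k mod 2 + 4 * spread (k div 2))"
declare spread.simps[simp del]

lemma spread_0[simp]: "spread 0 = 0" by (subst spread.simps) simp

lemma spread_eq: "spread k = k mod 2 + 4 * spread (k div 2)"
  by (cases "k = 0") (simp, subst spread.simps, simp)

lemma spread_Suc: "spread k < spread (Suc k)"
proof (induction k rule: less_induct)
  case (less k)
  show ?case
  proof (cases "even k")
    case True
    then obtain j where j: "k = 2*j" by (auto elim: evenE)
    have "spread k = 4 * spread j" using spread_eq[of k] j by simp
    moreover have "spread (Suc k) = 1 + 4 * spread j" using spread_eq[of "Suc k"] j by simp
    ultimately show ?thesis by simp
  next
    case False
    then obtain j where j: "k = 2*j+1" by (auto elim: oddE)
    have "spread k = 1 + 4 * spread j" using spread_eq[of k] j by simp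
    moreover have "spread (Suc k) = 4 * spread (Suc j)" using spread_eq[of "Suc k"] j by simp
    moreover have "spread j < spread (Suc j)" using less j by simp
    ultimately show ?thesis by simp
  qed
qed

lemma spread_mono: "strict_mono spread"
  using spread_Suc by (simp add: strict_mono_Suc_iff)

lemma spread_pos: "k \<ge> 1 \<Longrightarrow> spread k \<ge> 1"
  using strict_monoD[OF spread_mono, of 0 k] by simp

lemma mdb_spread: "mdb (spread k)"
proof (induction k rule: less_induct)
  case (less k)
  show ?case
  proof (cases "k = 0")
    case False
    have "spread k mod 4 = k mod 2" "spread k div 4 = spread (k div 2)"
      using spread_eq[of k] by auto
    then show ?thesis using mdb_char[of "spread k"] less False by simp
  qed simp
qed

lemma mdb_range: "mdb d \<Longrightarrow> \<exists>k. d = spread k"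
proof (induction d rule: less_induct)
  case (less d)
  show ?case
  proof (cases "d = 0")
    case True then show ?thesis by (metis spread_0)
  next
    case False
    then have "d mod 4 \<le> 1" "mdb (d div 4)" using less.prems mdb_char[of d] by auto
    moreover have "d div 4 < d" using False by simp
    ultimately obtain j where j: "d div 4 = spread j" using less.IH by blast
    have "spread (2*j + d mod 4) = d mod 4 + 4 * spread j"
      using spread_eq[of "2*j + d mod 4"] \<open>d mod 4 \<le> 1\<close> by (auto simp: le_Suc_eq)
    also have "\<dots> = d" by (metis j mod_mult_div_eq)
    finally show ?thesis by metis
  qed
qed

lemma s2_4: "s2 (4*y) = s2 y" using s2_even[of "2*y"] s2_even[of y] by (simp add: mult.assoc)

lemma s2_spread: "s2 (spread k) = s2 k"
proof (induction k rule: less_induct)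
  case (less k)
  show ?case
  proof (cases "k = 0")
    case False
    show ?thesis
    proof (cases "even k")
      case True
      then obtain j where j: "k = 2*j" by (auto elim: evenE)
      then have "spread k = 4 * spread j" using spread_eq[of k] by simp
      then show ?thesis using less j False by (simp add: s2_4 s2_even)
    next
      case False
      then obtain j where j: "k = 2*j+1" by (auto elim: oddE)
      then have e: "spread k = 2*(2*spread j) + 1" using spread_eq[of k] by simp
      have "s2 (spread j) = s2 j" using less j by simp
      then show ?thesis using e j s2_odd[of "2*spread j"] s2_even[of "spread j"] s2_odd[of j] by simp
    qed
  qed simp
qed

lemma s2_spread_m1: "k \<ge> 1 \<Longrightarrow> s2 (2 * spread k - 1) mod 2 = s2 k mod 2"
proof (induction k rule: less_induct)
  case (less k)
  show ?case
  proof (cases "even k")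
    case True
    then obtain j where j: "k = 2*j" by (auto elim: evenE)
    with less.prems have j1: "j \<ge> 1" by simp
    have sp: "spread k = 4 * spread j" using spread_eq[of k] j by simp
    have "spread j \<ge> 1" using spread_pos[OF j1] .
    then have "2 * spread k - 1 = 2*(2*(2 * spread j - 1) + 1) + 1" using sp by simp
    then have "s2 (2 * spread k - 1) = s2 (2 * spread j - 1) + 2"
      using s2_odd[of "2*(2 * spread j - 1)+1"] s2_odd[of "2 * spread j - 1"] by simp
    then have "s2 (2 * spread k - 1) mod 2 = s2 (2 * spread j - 1) mod 2" by simp
    also have "\<dots> = s2 j mod 2" using less.IH[of j] j j1 by simp
    finally show ?thesis using j by (simp add: s2_even)
  next
    case False
    then obtain j where j: "k = 2*j+1" by (auto elim: oddE)
    have "spread k = 1 + 4 * spread j" using spread_eq[of k] j by simp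
    then have "2 * spread k - 1 = 2*(4 * spread j) + 1" by simp
    then show ?thesis using j s2_odd[of "4*spread j"] s2_4[of "spread j"] s2_spread[of j] s2_odd[of j] by simp
  qed
qed

lemma enum_unique_le:
  fixes f g :: "nat \<Rightarrow> nat"
  assumes f: "strict_mono f" and g: "strict_mono g" and r: "range g \<subseteq> range f"
  shows "f n \<le> g n"
proof -
  define h where "h = (\<lambda>n. inv f (g n))"
  have fh: "f (h n) = g n" for n unfolding h_def using r by (simp add: f_inv_into_f subset_iff)
  have "strict_mono h"
  proof (rule strict_monoI)
    fix i j :: nat assume "i < j"
    then have "f (h i) < f (h j)" using fh strict_monoD[OF g] by simp
    then show "h i < h j" using strict_mono_less[OF f] by blast
  qed
  then have "n \<le> h n" by (rule strict_mono_imp_increasing)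
  then have "f n \<le> f (h n)" using strict_mono_less_eq[OF f] by blast
  then show ?thesis using fh by simp
qed

lemma enum_unique:
  fixes f :: "nat \<Rightarrow> nat"
  assumes f: "strict_mono f" and r: "range f = S"
  shows "enumerate S n = f n"
proof -
  have inf: "infinite S" using r f
    by (metis finite_imageD infinite_UNIV_nat strict_mono_imp_inj_on)
  have g: "strict_mono (enumerate S)" using enumerate_mono[OF _ inf] by (simp add: strict_mono_def)
  have rg: "range (enumerate S) = S" using bij_enumerate[OF inf] by (simp add: bij_betw_def)
  show ?thesis using enum_unique_le[OF f g] enum_unique_le[OF g f] r rg
    by (simp add: order_antisym)
qed

definition ee :: "nat \<Rightarrow> nat" where
  "ee j = 2 * spread (j div 2 + 1) - (if even j then 1 else 0)"

lemma ee_mono: "strict_mono ee"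
proof -
  have "ee j < ee (Suc j)" for j
  proof (cases "even j")
    case True
    then have "j div 2 = Suc j div 2" by presburger
    moreover have "spread (j div 2 + 1) \<ge> 1" using spread_pos by simp
    ultimately show ?thesis using True unfolding ee_def by simp
  next
    case False
    then have d: "Suc j div 2 = j div 2 + 1" by presburger
    have "spread (j div 2 + 1) < spread (j div 2 + 2)" using spread_Suc[of "j div 2 + 1"] by simp
    then show ?thesis using False d unfolding ee_def by simp
  qed
  then show ?thesis by (simp add: strict_mono_Suc_iff)
qed

lemma ee_range: "range ee = {m. m \<ge> 1 \<and> fps_nth G0 m = 1}"
proof (intro set_eqI iffI)
  fix m assume "m \<in> range ee"
  then obtain j where m: "m = ee j" by blast
  have p: "spread (j div 2 + 1) \<ge> 1" using spread_pos by simp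
  have "m \<ge> 1" "(m + 1) div 2 = spread (j div 2 + 1)" using p unfolding m ee_def by auto
  then show "m \<in> {m. m \<ge> 1 \<and> fps_nth G0 m = 1}" by (simp add: G0_def mdb_spread)
next
  fix m assume "m \<in> {m. m \<ge> 1 \<and> fps_nth G0 m = 1}"
  then have m1: "m \<ge> 1" and md: "mdb ((m+1) div 2)" by (auto simp: G0_def split: if_splits)
  obtain k where k: "(m+1) div 2 = spread k" using mdb_range[OF md] by blast
  have "k \<noteq> 0" using k m1 by (metis spread_0 div_greater_zero_iff le_add2 add_mono_thms_linordered_field(4) One_nat_def one_add_one zero_less_one not_one_le_zero le_simps(3) le_add_same_cancel2 Suc_eq_plus1 not_less_eq_eq)
  then obtain i where i: "k = i + 1" by (metis Suc_eq_plus1 not0_implies_Suc)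
  show "m \<in> range ee"
  proof (cases "even m")
    case True
    have "ee (2*i+1) = m" unfolding ee_def using k i True by (auto elim!: evenE)
    then show ?thesis by (metis rangeI)
  next
    case False
    have "ee (2*i) = m" unfolding ee_def using k i False by (auto elim!: oddE)
    then show ?thesis by (metis rangeI)
  qed
qed


lemma aseq_G0: "aseq G0 n = (if n = 0 then 0 else ee (n - 1))"
  unfolding aseq_def using enum_unique[OF ee_mono ee_range] by simp

lemma tm_aseq_even: "tm (aseq G0 (2*n)) = tm n"
proof (cases "n = 0")
  case True then show ?thesis by (simp add: aseq_G0 tm_def)
next
  case False
  then have "(2*n - 1) div 2 + 1 = n" "odd (2*n - 1)" by presburger+
  then have "aseq G0 (2*n) = 2 * spread n" using False by (simp add: aseq_G0 ee_def)
  then show ?thesis using s2_even[of "spread n"] by (simp add: tm_def s2_spread)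
qed

lemma tm_aseq_odd: "tm (aseq G0 (2*n+1)) = tm (n+1)"
proof -
  have "aseq G0 (2*n+1) = 2 * spread (n+1) - 1" by (simp add: aseq_G0 ee_def)
  then show ?thesis using s2_spread_m1[of "n+1"] by (simp add: tm_def)
qed

theorem mainTheorem9:
  fixes G :: "bit fps"
  assumes "fps_nth G 0 = 0"
    and "tmF oo G = fps_X"
    and "G oo tmF = fps_X"
  shows "(\<forall>n. real (tm (aseq G n)) =
            (real (tm n) + real (tm (n + 1))) / 2
            + (-1) ^ n * (real (tm n) - real (tm (n + 1))) / 2)
       \<and> (\<forall>n. tm (aseq G (2 * n)) = tm n \<and> tm (aseq G (2 * n + 1)) = tm (n + 1))"
proof -
  have GG: "G = G0" using G_is_G0 assms(1,2) by blast
  have P2: "\<forall>n. tm (aseq G (2 * n)) = tm n \<and> tm (aseq G (2 * n + 1)) = tm (n + 1)"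
    unfolding GG using tm_aseq_even tm_aseq_odd by blast
  have P1: "real (tm (aseq G n)) =
            (real (tm n) + real (tm (n + 1))) / 2
            + (-1) ^ n * (real (tm n) - real (tm (n + 1))) / 2" for n
  proof (cases "even n")
    case True
    then obtain k where k: "n = 2*k" by (auto elim: evenE)
    have "tm (aseq G n) = tm n" using P2 k tm_even[of k] by simp
    then show ?thesis using True by (simp add: field_simps)
  next
    case False
    then obtain k where k: "n = 2*k+1" by (auto elim: oddE)
    have "n + 1 = 2*(k+1)" using k by simp
    then have "tm (aseq G n) = tm (n+1)" using P2 k tm_even[of "k+1"] by simp
    then show ?thesis using False by (simp add: field_simps)
  qed
  show ?thesis using P1 P2 by blast
qed

end
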